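(* Let $d\ge1$, $L\ge1$, $1\le q<d$. For every integer $T\ge(2L)^d$, $\mathbb{D}_{\mathrm{onl}}(\mathcal{H}_L)\ge(2L)^qT^{1-q/d}$ (with respect to the loss $\ell_q$). In particular $\mathbb{D}_{\mathrm{onl}}(\mathcal{H}_L)=\infty$.
   Context: $\mathcal{X}=[-1,1]^d$, $\mathcal{Y}=[0,1]$, $\mathcal{H}_L=\{h:\mathcal X\to[0,1]:|h(x)-h(x')|\le L\|x-x'\|_\infty\}$, loss $\ell_q(y,y')=|y-y'|^q$. Scaled Littlestone tree of depth $D\le\infty$: internal nodes $u\in\{0,1\}^{<D}$ labeled $x_u\in\mathcal X$, edges labeled $s_{u,0},s_{u,1}\in\mathcal{Y}$, gap $\gamma_u=\ell_q(s_{u,0},s_{u,1})$; realizable by $\mathcal{H}_L$ if for every branch $b$ and finite $n\le D$ some $h\in\mathcal{H}_L$ has $h(x_{b_{\le t}})=s_{b_{\le t},b_{t+1}}$ for $t<n$ ($b_{\le t}$ the length-$t$ prefix). $\mathbb{D}_{\mathrm{onl}}(\mathcal{H}_L)=\sup_{\mathcal T}\inf_b\sum_t\gamma_{b_{\le t}}$ over realizable trees and their branches. *)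

theory Defs
  imports "HOL-Analysis.Analysis"
begin

text \<open>Instance space X = [-1,1]^d, with d = CARD('n) and points in real^'n.\<close>
definition cube :: "(real^'n) set" where
  "cube = {x. \<forall>i. \<bar>x $ i\<bar> \<le> 1}"

text \<open>H_L: functions X -> [0,1] that are L-Lipschitz w.r.t. the sup norm (infnorm).
  Functions are total in HOL; only their values on X matter.\<close>
definition lip_class :: "real \<Rightarrow> (real^'n \<Rightarrow> real) set" where
  "lip_class L = {h. (\<forall>x\<in>cube. 0 \<le> h x \<and> h x \<le> 1) \<and>
      (\<forall>x\<in>cube. \<forall>x'\<in>cube. \<bar>h x - h x'\<bar> \<le> L * infnorm (x - x'))}"

definition lossq :: "real \<Rightarrow> real \<Rightarrow> real \<Rightarrow> real" where
  "lossq q y y' = \<bar>y - y'\<bar> powr q"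

text \<open>Prefix b_{<=t} of a branch b (bits b 0, ..., b (t-1)); node = bool list
  (False = 0, True = 1).\<close>
definition pre :: "(nat \<Rightarrow> bool) \<Rightarrow> nat \<Rightarrow> bool list" where
  "pre b t = map b [0..<t]"

text \<open>A scaled Littlestone tree of depth D (enat, possibly infinite) is given by
  node labels xl u and edge labels sl u c (c = child bit), for nodes u with length u < D.
  Realizability by H_L.\<close>
definition realizable ::
  "real \<Rightarrow> enat \<Rightarrow> (bool list \<Rightarrow> real^'n) \<Rightarrow> (bool list \<Rightarrow> bool \<Rightarrow> real) \<Rightarrow> bool" where
  "realizable L D xl sl \<longleftrightarrow>
     (\<forall>u. enat (length u) < D \<longrightarrow>
         xl u \<in> cube \<and> sl u False \<in> {0..1} \<and> sl u True \<in> {0..1}) \<and>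
     (\<forall>b n. enat n \<le> D \<longrightarrow>
         (\<exists>h\<in>lip_class L. \<forall>t<n. h (xl (pre b t)) = sl (pre b t) (b t)))"

definition branch_gap :: "real \<Rightarrow> enat \<Rightarrow> (bool list \<Rightarrow> bool \<Rightarrow> real) \<Rightarrow> (nat \<Rightarrow> bool) \<Rightarrow> ennreal" where
  "branch_gap q D sl b =
     (\<Sum>t. if enat t < D then ennreal (lossq q (sl (pre b t) False) (sl (pre b t) True)) else 0)"

definition D_onl :: "'n::finite itself \<Rightarrow> real \<Rightarrow> real \<Rightarrow> ennreal" where
  "D_onl _ L q = (SUP T \<in> {(D, xl, sl). realizable L D (xl :: bool list \<Rightarrow> real^'n) sl}.
       (case T of (D, xl, sl) \<Rightarrow> (INF b. branch_gap q D sl b)))"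

end

theory Submission
  imports Defs
begin

lemma max_lip1:
  fixes g :: "nat \<Rightarrow> 'a \<Rightarrow> real"
  assumes "finite S" "\<And>t. t \<in> S \<Longrightarrow> \<bar>g t x - g t y\<bar> \<le> d" "0 \<le> d"
  shows "Max (insert 0 ((\<lambda>t. g t x) ` S)) \<le> Max (insert 0 ((\<lambda>t. g t y) ` S)) + d"
proof -
  let ?My = "Max (insert 0 ((\<lambda>t. g t y) ` S))"
  have ge: "a \<le> ?My" if "a \<in> insert 0 ((\<lambda>t. g t y) ` S)" for a
    using that assms(1) by (intro Max_ge) auto
  show ?thesis
  proof (subst Max_le_iff)
    show "finite (insert 0 ((\<lambda>t. g t x) ` S))" using assms(1) by simp
    show "insert 0 ((\<lambda>t. g t x) ` S) \<noteq> {}" by simp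
    show "\<forall>a\<in>insert 0 ((\<lambda>t. g t x) ` S). a \<le> ?My + d"
    proof
      fix a assume "a \<in> insert 0 ((\<lambda>t. g t x) ` S)"
      then consider "a = 0" | t where "t \<in> S" "a = g t x" by auto
      then show "a \<le> ?My + d"
      proof cases
        case 1 then show ?thesis using ge[of 0] assms(3) by simp
      next
        case 2
        have "g t y \<le> ?My" using ge[of "g t y"] 2 by simp
        then show ?thesis using assms(2)[OF 2(1)] 2 by linarith
      qed
    qed
  qed
qed

lemma max_lip:
  fixes g :: "nat \<Rightarrow> 'a \<Rightarrow> real"
  assumes "finite S" "\<And>t. t \<in> S \<Longrightarrow> \<bar>g t x - g t y\<bar> \<le> d" "0 \<le> d"
  shows "\<bar>Max (insert 0 ((\<lambda>t. g t x) ` S)) - Max (insert 0 ((\<lambda>t. g t y) ` S))\<bar> \<le> d"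
proof -
  have "Max (insert 0 ((\<lambda>t. g t x) ` S)) \<le> Max (insert 0 ((\<lambda>t. g t y) ` S)) + d"
    by (rule max_lip1[where g=g and x=x and y=y, OF assms])
  moreover have "Max (insert 0 ((\<lambda>t. g t y) ` S)) \<le> Max (insert 0 ((\<lambda>t. g t x) ` S)) + d"
    by (rule max_lip1[where g=g and x=y and y=x, OF assms(1) _ assms(3)]) (use assms(2) in force)
  ultimately show ?thesis by linarith
qed

lemma big:
  fixes L q :: real and N :: nat
  assumes L: "L \<ge> 1" and N: "N \<ge> 1"
  shows "ennreal (real (N ^ CARD('n)) * (1 / real N) powr q) \<le> D_onl TYPE('n::finite) L q"
proof -
  define K where "K = (PiE UNIV (\<lambda>_::'n. {..<N}))"
  have finK: "finite K" unfolding K_def by (simp add: finite_PiE)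
  have cardK: "card K = N ^ CARD('n)" unfolding K_def by (simp add: card_PiE)
  obtain e where e: "bij_betw e {0..<card K} K" using ex_bij_betw_nat_finite[OF finK] by blast
  define T where "T = card K"
  define gp where "gp k = (\<chi> i. -1 + (2 * real (k i) + 1) / real N :: real^'n)" for k :: "'n \<Rightarrow> nat"
  define p where "p t = gp (e t)" for t
  define c where "c = 1 / real N"
  have c0: "0 < c" and c1: "c \<le> 1" using N by (auto simp: c_def)
  define bump where "bump t x = max 0 (c - infnorm (x - p t))" for t x
  define xl where "xl u = p (length u)" for u :: "bool list"
  define sl where "sl u bb = (if bb then c else 0)" for u :: "bool list" and bb :: bool
  have eK: "t < T \<Longrightarrow> e t \<in> K" for t using e unfolding T_def bij_betw_def by auto
  have pin: "p t \<in> cube" if "t < T" for t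
  proof -
    have "e t i < N" for i using eK[OF that] unfolding K_def by auto
    then have ei: "real (e t i) + 1 \<le> real N" for i by (metis of_nat_Suc of_nat_le_iff Suc_le_eq add.commute)
    have "\<bar>-1 + (2 * real (e t i) + 1) / real N\<bar> \<le> 1" for i
      using N ei[of i] by (auto simp: abs_le_iff field_simps)
    then show ?thesis unfolding cube_def p_def gp_def by simp
  qed
  have sep: "2 * c \<le> infnorm (p t - p s)" if "t < T" "s < T" "t \<noteq> s" for t s
  proof -
    have "e t \<noteq> e s" using e that unfolding T_def bij_betw_def inj_on_def by auto
    then obtain i where i: "e t i \<noteq> e s i" by auto
    have d1: "1 \<le> \<bar>real (e t i) - real (e s i)\<bar>" using i by linarith
    have abs2: "\<bar>2 * x / real N\<bar> = 2 * \<bar>x\<bar> / real N" for x :: real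
      by (simp add: abs_divide abs_mult)
    have eq: "(p t - p s) $ i = 2 * (real (e t i) - real (e s i)) / real N"
      using N by (simp add: p_def gp_def field_simps)
    have "2 * c = 2 * 1 / real N" by (simp add: c_def)
    also have "\<dots> \<le> 2 * \<bar>real (e t i) - real (e s i)\<bar> / real N"
      using N d1 by (intro divide_right_mono) auto
    also have "\<dots> = \<bar>(p t - p s) $ i\<bar>" unfolding eq using N abs2[of "real (e t i) - real (e s i)"] by simp
    finally have "2 * c \<le> \<bar>(p t - p s) $ i\<bar>" .
    also have "\<dots> \<le> infnorm (p t - p s)" by (rule component_le_infnorm_cart)
    finally show ?thesis .
  qed
  have bump_lip: "\<bar>bump t x - bump t y\<bar> \<le> infnorm (x - y)" for t x y
  proof -
    have "infnorm (x - p t) \<le> infnorm (x - y) + infnorm (y - p t)"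
      using infnorm_triangle[of "x - y" "y - p t"] by simp
    moreover have "infnorm (y - p t) \<le> infnorm (y - x) + infnorm (x - p t)"
      using infnorm_triangle[of "y - x" "x - p t"] by simp
    moreover have "infnorm (y - x) = infnorm (x - y)" by (rule infnorm_sub)
    ultimately show ?thesis unfolding bump_def by linarith
  qed
  have bump_le: "bump t x \<le> c" for t x
    unfolding bump_def using c0 infnorm_pos_le[of "x - p t"] by simp
  have realz: "realizable L (enat T) xl sl"
    unfolding realizable_def
  proof (intro conjI allI impI)
    fix u :: "bool list" assume "enat (length u) < enat T"
    then show "xl u \<in> cube" using pin by (simp add: xl_def)
    show "sl u False \<in> {0..1}" "sl u True \<in> {0..1}" using c0 c1 by (auto simp: sl_def)
  next
    fix b :: "nat \<Rightarrow> bool" and n assume nT: "enat n \<le> enat T"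
    define S where "S = {t. t < n \<and> b t}"
    have finS: "finite S" unfolding S_def by simp
    define h where "h x = Max (insert 0 ((\<lambda>t. bump t x) ` S))" for x
    have h0: "0 \<le> h x" for x unfolding h_def using finS by (intro Max_ge) auto
    have h1: "h x \<le> c" for x unfolding h_def using finS bump_le c0 by (subst Max_le_iff) auto
    have "h \<in> lip_class L"
      unfolding lip_class_def
    proof (intro CollectI conjI ballI)
      fix x show "0 \<le> h x" by (rule h0)
      show "h x \<le> 1" using h1[of x] c1 by simp
    next
      fix x x' :: "real^'n"
      have "\<bar>h x - h x'\<bar> \<le> infnorm (x - x')"
        unfolding h_def by (rule max_lip[where g=bump and x=x and y=x', OF finS bump_lip infnorm_pos_le])
      also have "\<dots> \<le> L * infnorm (x - x')"
        using L infnorm_pos_le[of "x - x'"] using mult_right_mono[of 1 L "infnorm (x - x')"] by simp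
      finally show "\<bar>h x - h x'\<bar> \<le> L * infnorm (x - x')" .
    qed
    moreover have "h (xl (pre b t)) = sl (pre b t) (b t)" if tn: "t < n" for t
    proof -
      have tT: "t < T" using tn nT by simp
      have xlp: "xl (pre b t) = p t" by (simp add: xl_def pre_def)
      show ?thesis
      proof (cases "b t")
        case True
        have tS: "t \<in> S" using True tn by (simp add: S_def)
        have "bump t (p t) = c" using c0 by (simp add: bump_def infnorm_0)
        then have "c \<le> h (p t)" unfolding h_def using finS tS
          by (intro Max_ge) auto
        then show ?thesis using h1[of "p t"] True by (simp add: xlp sl_def)
      next
        case False
        have "bump s (p t) = 0" if "s \<in> S" for s
        proof -
          have "s < T" "s \<noteq> t" using that False nT by (auto simp: S_def)
          then have "2 * c \<le> infnorm (p t - p s)" using sep tT by auto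
          then show ?thesis using c0 by (simp add: bump_def infnorm_0)
        qed
        then have "h (p t) \<le> 0" unfolding h_def using finS by (subst Max_le_iff) auto
        then show ?thesis using h0[of "p t"] False by (simp add: xlp sl_def)
      qed
    qed
    ultimately show "\<exists>h\<in>lip_class L. \<forall>t<n. h (xl (pre b t)) = sl (pre b t) (b t)" by blast
  qed
  have gap: "branch_gap q (enat T) sl b = ennreal (real T * c powr q)" for b
  proof -
    have "branch_gap q (enat T) sl b = (\<Sum>t<T. ennreal (c powr q))"
      unfolding branch_gap_def
      by (subst suminf_finite[of "{..<T}"]) (use c0 in \<open>auto simp: lossq_def sl_def\<close>)
    also have "\<dots> = ennreal (real T * c powr q)"
      by (simp add: ennreal_of_nat_eq_real_of_nat ennreal_mult)
    finally show ?thesis .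
  qed
  have "ennreal (real T * c powr q) = (INF b. branch_gap q (enat T) sl b)"
    using gap by simp
  also have "\<dots> \<le> D_onl TYPE('n) L q"
    unfolding D_onl_def
    by (rule SUP_upper2[where i="(enat T, xl, sl)"]) (use realz in auto)
  finally show ?thesis by (simp add: T_def cardK c_def)
qed

lemma powbound:
  fixes N :: nat and q :: real
  assumes "N \<ge> 1"
  shows "real (N ^ d) * (1 / real N) powr q = real N powr (real d - q)"
proof -
  have N0: "0 < real N" using assms by simp
  have "real (N ^ d) = real N powr real d" using N0 by (simp add: powr_realpow)
  moreover have "(1 / real N) powr q = 1 / real N powr q" using N0 by (simp add: powr_divide)
  ultimately show ?thesis by (simp add: powr_diff)
qed

theorem theoremA8:
  fixes L q :: real
  assumes "L \<ge> 1" and "1 \<le> q" and "q < real CARD('n::finite)"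
  shows "(\<forall>T::nat. real T \<ge> (2 * L) ^ CARD('n) \<longrightarrow>
            D_onl TYPE('n) L q \<ge> ennreal ((2 * L) powr q * real T powr (1 - q / real CARD('n))))
         \<and> D_onl TYPE('n) L q = \<infinity>"
proof -
  have inf: "D_onl TYPE('n) L q = \<infinity>"
  proof (rule ccontr)
    assume "D_onl TYPE('n) L q \<noteq> \<infinity>"
    then obtain r where r: "D_onl TYPE('n) L q = ennreal r" "0 \<le> r"
      by (cases "D_onl TYPE('n) L q") auto
    define ex where "ex = real CARD('n) - q"
    have ex0: "0 < ex" using assms by (simp add: ex_def)
    obtain M :: nat where M: "(r + 1) powr (1 / ex) \<le> real M" using real_arch_simple by blast
    define N where "N = max 1 M"
    have N1: "N \<ge> 1" and NM: "real M \<le> real N" by (auto simp: N_def)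
    have "r + 1 = ((r + 1) powr (1 / ex)) powr ex" using ex0 r(2) by (simp add: powr_powr)
    also have "\<dots> \<le> real N powr ex"
      using M NM ex0 r(2) by (intro powr_mono2) auto
    also have "\<dots> = real (N ^ CARD('n)) * (1 / real N) powr q"
      using powbound[OF N1] by (simp add: ex_def)
    finally have le: "r + 1 \<le> real (N ^ CARD('n)) * (1 / real N) powr q" .
    have "ennreal (r + 1) \<le> ennreal (real (N ^ CARD('n)) * (1 / real N) powr q)"
      using le by (rule ennreal_leI)
    also have "\<dots> \<le> ennreal r" using big[OF assms(1) N1, where 'n='n and q=q] r(1) by simp
    finally show False using r(2) by (simp add: ennreal_le_iff)
  qed
  then show ?thesis by simp
qed

end
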